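(* Let $F=\begin{pmatrix}1&0&-1\\0&0&0\\-1&0&1\end{pmatrix}$ (edge detect A filter). Then the equation $F*X=B$ with the zero boundary condition, for unknown $X\in\mathbb{R}^{m\times n}$, has a unique solution for every $B\in\mathbb{R}^{m\times n}$ if and only if $m,n\notin\{2l-1: l\in\mathbb{N}\}$.
   Context: $\mathbb{N}=\{1,2,3,\dots\}$. For $F=[f_{ij}]\in\mathbb{R}^{3\times3}$ and $X=[x_{ij}]\in\mathbb{R}^{m\times n}$, the convolution $F*X\in\mathbb{R}^{m\times n}$ is defined by $[F*X]_{ij}=\sum_{l_1=1}^3\sum_{l_2=1}^3 f_{l_1l_2}\,x_{i-l_1+2,\,j-l_2+2}$ for $1\le i\le m$, $1\le j\le n$, where under the zero boundary condition all values $x_{ij}$ with $i\in\{0,m+1\}$ or $j\in\{0,n+1\}$ are $0$. *)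

theory Defs
  imports "HOL-Analysis.Analysis"
begin

text \<open>An m x n real matrix is represented as a function int => int => real whose
  entries with indices outside {1..m} x {1..n} are zero (zero boundary condition).
  A 3x3 filter is a function int => int => real, only the entries (1..3,1..3) are used.\<close>

definition mats :: "nat \<Rightarrow> nat \<Rightarrow> (int \<Rightarrow> int \<Rightarrow> real) set" where
  "mats m n = {X. \<forall>i j. \<not> (1 \<le> i \<and> i \<le> int m \<and> 1 \<le> j \<and> j \<le> int n) \<longrightarrow> X i j = 0}"

definition zext :: "nat \<Rightarrow> nat \<Rightarrow> (int \<Rightarrow> int \<Rightarrow> real) \<Rightarrow> int \<Rightarrow> int \<Rightarrow> real" where
  "zext m n X i j = (if 1 \<le> i \<and> i \<le> int m \<and> 1 \<le> j \<and> j \<le> int n then X i j else 0)"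

text \<open>[F*X]_ij = sum_{l1,l2=1..3} f_{l1 l2} x_{i-l1+2, j-l2+2} for 1<=i<=m, 1<=j<=n;
  zero outside the index range so that the result is again an m x n matrix.\<close>
definition conv :: "nat \<Rightarrow> nat \<Rightarrow> (int \<Rightarrow> int \<Rightarrow> real) \<Rightarrow> (int \<Rightarrow> int \<Rightarrow> real) \<Rightarrow> int \<Rightarrow> int \<Rightarrow> real" where
  "conv m n F X i j = (if 1 \<le> i \<and> i \<le> int m \<and> 1 \<le> j \<and> j \<le> int n
      then (\<Sum>l1\<in>{1..3}. \<Sum>l2\<in>{1..3}. F l1 l2 * zext m n X (i - l1 + 2) (j - l2 + 2))
      else 0)"

definition edgeA :: "int \<Rightarrow> int \<Rightarrow> real" where
  "edgeA l1 l2 = (if (l1 = 1 \<or> l1 = 3) \<and> (l2 = 1 \<or> l2 = 3) then (if l1 = l2 then 1 else -1) else 0)"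

end

theory Submission
  imports Defs
begin

definition D1 :: "nat \<Rightarrow> (int \<Rightarrow> real) \<Rightarrow> int \<Rightarrow> real" where
  "D1 m y i = (if 1 \<le> i \<and> i \<le> int m then y (i+1) - y (i-1) else 0)"

definition zero1 :: "nat \<Rightarrow> (int \<Rightarrow> real) \<Rightarrow> bool" where
  "zero1 m y = (\<forall>i. \<not> (1 \<le> i \<and> i \<le> int m) \<longrightarrow> y i = 0)"

lemma int13: "{1..3::int} = {1,2,3}" by auto

lemma conv_formula:
  "conv m n edgeA X i j = (if 1 \<le> i \<and> i \<le> int m \<and> 1 \<le> j \<and> j \<le> int n then
     zext m n X (i+1) (j+1) - zext m n X (i+1) (j-1) - zext m n X (i-1) (j+1) + zext m n X (i-1) (j-1)
     else 0)"
  unfolding conv_def int13 by (simp add: edgeA_def add.commute)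

lemma zext_mats: "X \<in> mats m n \<Longrightarrow> zext m n X = X"
  unfolding zext_def mats_def by (auto intro!: ext)

lemma conv_RC:
  assumes "X \<in> mats m n"
  shows "conv m n edgeA X = (\<lambda>i j. D1 m (\<lambda>i. D1 n (X i) j) i)"
proof (intro ext)
  fix i j
  have z: "\<And>a b. \<not> (1 \<le> a \<and> a \<le> int m \<and> 1 \<le> b \<and> b \<le> int n) \<Longrightarrow> X a b = 0"
    using assms unfolding mats_def by auto
  show "conv m n edgeA X i j = D1 m (\<lambda>i. D1 n (X i) j) i"
    unfolding conv_formula zext_mats[OF assms] D1_def
    using z by auto
qed

lemma D1_unique:
  assumes "even m" "zero1 m y" "zero1 m y'" "D1 m y = D1 m y'"
  shows "y = y'"
proof -
  define d where "d i = y i - y' i" for i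
  have dz: "\<And>i. \<not> (1 \<le> i \<and> i \<le> int m) \<Longrightarrow> d i = 0"
    using assms(2,3) unfolding zero1_def d_def by auto
  have dr: "\<And>i. 1 \<le> i \<Longrightarrow> i \<le> int m \<Longrightarrow> d (i+1) = d (i-1)"
  proof -
    fix i :: int assume "1 \<le> i" "i \<le> int m"
    then have "D1 m y i = D1 m y' i" using assms(4) by simp
    then show "d (i+1) = d (i-1)" using \<open>1 \<le> i\<close> \<open>i \<le> int m\<close> unfolding D1_def d_def by auto
  qed
  have ev: "d (2 * int k) = 0" for k
  proof (induction k)
    case 0 then show ?case using dz by simp
  next
    case (Suc k)
    show ?case
    proof (cases "2 * int k + 1 \<le> int m")
      case True
      then have "d (2*int k + 1 + 1) = d (2 * int k + 1 - 1)" by (intro dr) auto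
      then show ?thesis using Suc by (simp add: algebra_simps)
    next
      case False then show ?thesis by (intro dz) auto
    qed
  qed
  have od: "d (int m + 1 - 2 * int k) = 0" for k
  proof (induction k)
    case 0 then show ?case using dz by simp
  next
    case (Suc k)
    show ?case
    proof (cases "1 \<le> int m - 2 * int k")
      case True
      then have "d (int m - 2 * int k + 1) = d (int m - 2 * int k - 1)" by (intro dr) auto
      then show ?thesis using Suc by (simp add: algebra_simps)
    next
      case False then show ?thesis by (intro dz) auto
    qed
  qed
  have "d i = 0" for i
  proof (cases "even i")
    case True
    show ?thesis
    proof (cases "i \<ge> 0")
      case True
      then obtain k where "i = 2 * int k" using \<open>even i\<close>
        by (metis evenE nonneg_int_cases zero_le_mult_iff zero_less_numeral order_less_imp_le mult_nonneg_nonneg  not_le mult_pos_neg less_le_not_le int_ops(3) pos_int_cases)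
      then show ?thesis using ev by simp
    next
      case False then show ?thesis by (intro dz) auto
    qed
  next
    case False
    show ?thesis
    proof (cases "i \<le> int m + 1")
      case True
      obtain mm where mm: "int m = 2 * mm" using assms(1) by (metis even_of_nat evenE)
      have "even (int m + 1 - i)" using False mm by presburger
      moreover have "int m + 1 - i \<ge> 0" using True by simp
      ultimately obtain k where "int m + 1 - i = 2 * int k"
        by (metis evenE nonneg_int_cases zero_le_mult_iff zero_less_numeral order_less_imp_le not_le  int_ops(3) pos_int_cases)
      then have "i = int m + 1 - 2 * int k" by simp
      then show ?thesis using od by simp
    next
      case False then show ?thesis by (intro dz) auto
    qed
  qed
  then show ?thesis unfolding d_def by auto
qed

lemma oddset: "odd i \<Longrightarrow> 1 \<le> i \<Longrightarrow> {k\<in>{1..i}. odd k} = insert i {k\<in>{1..i-2}. odd (k::int)}"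
  by (auto, presburger)

lemma evset: "even i \<Longrightarrow> i \<le> M \<Longrightarrow> {k\<in>{i..M}. even k} = insert i {k\<in>{i+2..M}. even (k::int)}"
  by (auto, presburger)

lemma D1_exist:
  assumes "even m" "zero1 m b"
  shows "\<exists>y. zero1 m y \<and> D1 m y = b"
proof -
  define P where "P i = sum b {k\<in>{1..i}. odd k}" for i
  define Q where "Q i = sum b {k\<in>{i..int m}. even k}" for i
  define y where "y i = (if 1 \<le> i \<and> i \<le> int m then (if even i then P (i-1) else - Q (i+1)) else 0)" for i
  obtain mm where mm: "int m = 2 * mm" using assms(1) by (metis even_of_nat evenE)
  have "D1 m y i = b i" for i
  proof (cases "1 \<le> i \<and> i \<le> int m")
    case False then show ?thesis using assms(2) unfolding zero1_def D1_def by auto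
  next
    case True
    show ?thesis
    proof (cases "even i")
      case False
      have a: "y (i+1) = P i" using True False mm unfolding y_def by auto presburger+
      have b: "y (i-1) = P (i-2)"
      proof (cases "i = 1")
        case True then show ?thesis unfolding y_def P_def by simp
      next
        case False then show ?thesis using True \<open>odd i\<close> unfolding y_def by auto
      qed
      have "P i = b i + P (i-2)" unfolding P_def oddset[OF False conjunct1[OF True]]
        by (subst sum.insert) (auto intro: finite_subset[of _ "{1..i-2}"])
      then show ?thesis using a b True unfolding D1_def by simp
    next
      case ev: True
      have a: "y (i+1) = - Q (i+2)"
      proof (cases "i = int m")
        case True then show ?thesis unfolding y_def Q_def by simp
      next
        case False then show ?thesis using True ev unfolding y_def by (auto simp: add.commute)
      qed
      have i1: "1 \<le> i - 1" using True ev by presburger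
      have b: "y (i-1) = - Q i" using True ev i1 unfolding y_def by auto
      have "Q i = b i + Q (i+2)" unfolding Q_def evset[OF ev conjunct2[OF True]]
        by (subst sum.insert) (auto intro: finite_subset[of _ "{i+2..int m}"])
      then show ?thesis using a b True unfolding D1_def by simp
    qed
  qed
  moreover have "zero1 m y" unfolding zero1_def y_def by auto
  ultimately show ?thesis by blast
qed

lemma oddset_iff: "((m::nat) \<in> {2 * l - 1 | l :: nat. l \<ge> 1}) \<longleftrightarrow> odd m"
proof
  assume "m \<in> {2 * l - 1 | l :: nat. l \<ge> 1}"
  then obtain l where "m = 2*l - 1" "l \<ge> 1" by auto
  then show "odd m" by presburger
next
  assume "odd m"
  then have "m = 2 * ((m+1) div 2) - 1 \<and> (m+1) div 2 \<ge> 1" by presburger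
  then show "m \<in> {2 * l - 1 | l :: nat. l \<ge> 1}" by blast
qed

lemma zero1_mats_col: "X \<in> mats m n \<Longrightarrow> zero1 m (\<lambda>i. X i j)"
  unfolding mats_def zero1_def by auto

lemma zero1_mats_row: "X \<in> mats m n \<Longrightarrow> zero1 n (X i)"
  unfolding mats_def zero1_def by auto

lemma D1_zero: "D1 m (\<lambda>_. 0) = (\<lambda>_. 0)"
  unfolding D1_def by auto

lemma D1_zero1: "zero1 m (D1 m y)"
  unfolding D1_def zero1_def by auto

lemma even_case:
  assumes "even m" "even n"
  shows "\<forall>B\<in>mats m n. \<exists>!X. X \<in> mats m n \<and> conv m n edgeA X = B"
proof
  fix B assume B: "B \<in> mats m n"
  have "\<forall>j. \<exists>y. zero1 m y \<and> D1 m y = (\<lambda>i. B i j)"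
    using D1_exist[OF assms(1) zero1_mats_col[OF B]] by blast
  then obtain f where f: "\<And>j. zero1 m (f j) \<and> D1 m (f j) = (\<lambda>i. B i j)" by metis
  define Y where "Y i j = (if 1 \<le> j \<and> j \<le> int n then f j i else 0)" for i j
  have Y: "Y \<in> mats m n" using f unfolding mats_def Y_def zero1_def by auto
  have YB: "D1 m (\<lambda>i. Y i j) i = B i j" for i j
  proof (cases "1 \<le> j \<and> j \<le> int n")
    case True
    then have "(\<lambda>i. Y i j) = f j" unfolding Y_def by auto
    then show ?thesis using f by simp
  next
    case False
    then have "(\<lambda>i. Y i j) = (\<lambda>_. 0)" unfolding Y_def by auto
    then show ?thesis using False B unfolding mats_def by (simp add: D1_def)
  qed
  have "\<forall>i. \<exists>z. zero1 n z \<and> D1 n z = Y i"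
    using D1_exist[OF assms(2) zero1_mats_row[OF Y]] by blast
  then obtain g where g: "\<And>i. zero1 n (g i) \<and> D1 n (g i) = Y i" by metis
  define X where "X i j = (if 1 \<le> i \<and> i \<le> int m then g i j else 0)" for i j
  have X: "X \<in> mats m n" using g unfolding mats_def X_def zero1_def by auto
  have XY: "D1 n (X i) j = Y i j" for i j
  proof (cases "1 \<le> i \<and> i \<le> int m")
    case True
    then have "X i = g i" unfolding X_def by auto
    then show ?thesis using g by simp
  next
    case False
    then have "X i = (\<lambda>_. 0)" unfolding X_def by auto
    then show ?thesis using False Y unfolding mats_def by (auto simp add: D1_def)
  qed
  have "conv m n edgeA X = B"
    unfolding conv_RC[OF X] XY YB by simp
  then have ex: "X \<in> mats m n \<and> conv m n edgeA X = B" using X by simp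
  have un: "X' = X" if "X' \<in> mats m n \<and> conv m n edgeA X' = B" for X'
  proof -
    have X': "X' \<in> mats m n" using that by simp
    have eq: "(\<lambda>i j. D1 m (\<lambda>i. D1 n (X' i) j) i) = (\<lambda>i j. D1 m (\<lambda>i. D1 n (X i) j) i)"
      using that \<open>conv m n edgeA X = B\<close> conv_RC[OF X] conv_RC[OF X'] by simp
    have c: "(\<lambda>i. D1 n (X' i) j) = (\<lambda>i. D1 n (X i) j)" for j
    proof (rule D1_unique[OF assms(1)])
      show "zero1 m (\<lambda>i. D1 n (X' i) j)" using X' unfolding zero1_def mats_def D1_def by auto
      show "zero1 m (\<lambda>i. D1 n (X i) j)" using X unfolding zero1_def mats_def D1_def by auto
      show "D1 m (\<lambda>i. D1 n (X' i) j) = D1 m (\<lambda>i. D1 n (X i) j)"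
      proof
        fix i show "D1 m (\<lambda>i. D1 n (X' i) j) i = D1 m (\<lambda>i. D1 n (X i) j) i"
          using fun_cong[OF fun_cong[OF eq, of i], of j] by simp
      qed
    qed
    have "X' i = X i" for i
    proof (rule D1_unique[OF assms(2) zero1_mats_row[OF X'] zero1_mats_row[OF X]])
      show "D1 n (X' i) = D1 n (X i)"
      proof
        fix j show "D1 n (X' i) j = D1 n (X i) j" using fun_cong[OF c[of j], of i] by simp
      qed
    qed
    then show ?thesis by auto
  qed
  show "\<exists>!X. X \<in> mats m n \<and> conv m n edgeA X = B"
    using ex un by blast
qed

lemma odd_case:
  assumes "m \<ge> 1" "n \<ge> 1" "odd m \<or> odd n"
  shows "\<not> (\<forall>B\<in>mats m n. \<exists>!X. X \<in> mats m n \<and> conv m n edgeA X = B)"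
proof -
  obtain X0 :: "int \<Rightarrow> int \<Rightarrow> real" where X0: "X0 \<in> mats m n" "conv m n edgeA X0 = (\<lambda>_ _. 0)" "X0 1 1 \<noteq> 0"
  proof (cases "odd m")
    case True
    define X0 :: "int \<Rightarrow> int \<Rightarrow> real" where "X0 i j = (if 1 \<le> i \<and> i \<le> int m \<and> odd i \<and> j = 1 then (1::real) else 0)" for i j
    have a: "X0 \<in> mats m n" unfolding X0_def mats_def using assms by auto
    have b: "conv m n edgeA X0 = (\<lambda>_ _. 0)"
    proof (intro ext)
      fix i j
      have "X0 (i+1) k = X0 (i-1) k" if "1 \<le> i" "i \<le> int m" for k
      proof -
        have om: "odd (int m)" using True by simp
        have e: "(1 \<le> i+1 \<and> i+1 \<le> int m \<and> odd (i+1) \<and> k = 1) = (1 \<le> i-1 \<and> i-1 \<le> int m \<and> odd (i-1) \<and> k = 1)"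
          using that om by presburger
        show ?thesis unfolding X0_def by (simp only: e)
      qed
      then show "conv m n edgeA X0 i j = 0"
        unfolding conv_formula zext_mats[OF a] by auto
    qed
    show ?thesis by (rule that[OF a b]) (use assms in \<open>simp add: X0_def\<close>)
  next
    case False
    then have True: "odd n" using assms by simp
    define X0 :: "int \<Rightarrow> int \<Rightarrow> real" where "X0 i j = (if 1 \<le> j \<and> j \<le> int n \<and> odd j \<and> i = 1 then (1::real) else 0)" for i j
    have a: "X0 \<in> mats m n" unfolding X0_def mats_def using assms by auto
    have b: "conv m n edgeA X0 = (\<lambda>_ _. 0)"
    proof (intro ext)
      fix i j
      have "X0 k (j+1) = X0 k (j-1)" if "1 \<le> j" "j \<le> int n" for k
      proof -
        have om: "odd (int n)" using True by simp
        have e: "(1 \<le> j+1 \<and> j+1 \<le> int n \<and> odd (j+1) \<and> k = 1) = (1 \<le> j-1 \<and> j-1 \<le> int n \<and> odd (j-1) \<and> k = 1)"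
          using that om by presburger
        show ?thesis unfolding X0_def by (simp only: e)
      qed
      then show "conv m n edgeA X0 i j = 0"
        unfolding conv_formula zext_mats[OF a] by auto
    qed
    show ?thesis by (rule that[OF a b]) (use assms in \<open>simp add: X0_def\<close>)
  qed
  have z: "(\<lambda>_ _. 0) \<in> mats m n" unfolding mats_def by auto
  have "conv m n edgeA (\<lambda>_ _. 0) = (\<lambda>_ _. 0)" by (intro ext) (simp add: conv_formula zext_def)
  moreover have "X0 \<noteq> (\<lambda>_ _. 0)" using X0(3) by auto
  moreover have "\<And>P a b. \<exists>!x. P x \<Longrightarrow> P a \<Longrightarrow> P b \<Longrightarrow> a = b" by blast
  ultimately show ?thesis using X0 z by blast
qed

theorem corollary7:
  fixes m n :: nat
  assumes "m \<ge> 1" and "n \<ge> 1"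
  shows "(\<forall>B\<in>mats m n. \<exists>!X. X \<in> mats m n \<and> conv m n edgeA X = B)
     \<longleftrightarrow> (m \<notin> {2 * l - 1 | l :: nat. l \<ge> 1} \<and> n \<notin> {2 * l - 1 | l :: nat. l \<ge> 1})"
  unfolding oddset_iff
proof
  assume H: "\<forall>B\<in>mats m n. \<exists>!X. X \<in> mats m n \<and> conv m n edgeA X = B"
  show "\<not> odd m \<and> \<not> odd n"
  proof (rule ccontr)
    assume "\<not> (\<not> odd m \<and> \<not> odd n)"
    then have "odd m \<or> odd n" by simp
    from odd_case[OF assms this] H show False by simp
  qed
next
  assume "\<not> odd m \<and> \<not> odd n"
  then show "\<forall>B\<in>mats m n. \<exists>!X. X \<in> mats m n \<and> conv m n edgeA X = B"
    using even_case by simp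
qed

end
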